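(* Let $1<p<\infty$ and let $c\colon\mathbb{R}^d\to\mathbb{R}$ be a cost satisfying the assumptions in the context. Let $\lambda,\mu$ be non-negative finite measures on $\mathbb{R}^d$ with $\lambda(\mathbb{R}^d)=\mu(\mathbb{R}^d)$, and let $\pi\in\Pi(\lambda,\mu)$ have $c$-cyclically monotone support. There exists $\varepsilon_0>0$ depending only on $d,p,\Lambda$ such that if $E(4)+D(4)\le\varepsilon_0$, then $$\int_2^3\int_{\Omega_R\cap\{\exists t\in[0,1]\colon X(t)\in\partial B_R\}}c(x-y)\,\mathrm{d}\pi\,\mathrm{d}R\lesssim (E(4)+D(4))^{1+\frac{1}{p+d}},$$ $$\int_2^3\pi\big(\Omega_R\cap\{\exists t\in[0,1]\colon X(t)\in\partial B_R\}\big)\,\mathrm{d}R\lesssim (E(4)+D(4))^{\frac{1}{p+d}}.$$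
   Context: $c\colon\mathbb{R}^d\to\mathbb{R}$ is $C^1$ and there is $\Lambda\ge1$ such that for all $x,y\in\mathbb{R}^d$, $s\in[0,1]$: (i) $\Lambda^{-1}s(1-s)V_p(x,y)+c(sx+(1-s)y)\le s\,c(x)+(1-s)c(y)$ with $V_p(x,y)=(|x|^2+|y|^2)^{\frac{p-2}{2}}|x-y|^2$; (ii) $\Lambda^{-1}|x|^p\le c(x)\le\Lambda|x|^p$; (iii) $|c(x)-c(y)|\le\Lambda(|x|+|y|)^{p-1}|x-y|$; (iv) $|\nabla c(x)-\nabla c(y)|\le\Lambda(|x|+|y|)^{p-2}|x-y|$. A set $S$ is $c$-cyclically monotone if for all $N$ and $(x_i,y_i)\in S$, $\sum_i c(x_i-y_i)\le\sum_i c(x_i-y_{i+1})$ with $y_{N+1}=y_1$. $B_r$ is the open ball of radius $r$ at $0$; $\#_R=(B_R\times\mathbb{R}^d)\cup(\mathbb{R}^d\times B_R)$. For $(x,y)$ write $X(t)=tx+(1-t)y$, $t\in[0,1]$, and $\Omega_R=\{(x,y)\in\#_3\colon \exists t\in[0,1],\ X(t)\in\overline{B_R}\}$. $\kappa_{\lambda,R}=\lambda(B_R)/|B_R|$, $\kappa_{\mu,R}=\mu(B_R)/|B_R|$; $W_p^p(\alpha,\beta)=\inf_{\gamma\in\Pi(\alpha,\beta)}\int|x-y|^p\,\mathrm{d}\gamma$. $E(R)=\frac{1}{|B_R|}\int_{\#_R}c(x-y)\,\mathrm{d}\pi$ and $D(R)=\frac{1}{|B_R|}W_p^p(\lambda\llcorner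 B_R,\kappa_{\lambda,R}\,\mathrm{d}x\llcorner B_R)+\frac{R^p}{\kappa_{\lambda,R}^{p-1}}|\kappa_{\lambda,R}-1|^p+\frac{1}{|B_R|}W_p^p(\mu\llcorner B_R,\kappa_{\mu,R}\,\mathrm{d}x\llcorner B_R)+\frac{R^p}{\kappa_{\mu,R}^{p-1}}|\kappa_{\mu,R}-1|^p$. $A\lesssim B$ means $A\le CB$ with $C$ depending only on $d,p,\Lambda$. *)

theory Defs
  imports "HOL-Analysis.Analysis"
begin

definition cost_assms :: "real \<Rightarrow> real \<Rightarrow> ('a::euclidean_space \<Rightarrow> real) \<Rightarrow> bool" where
  "cost_assms p \<Lambda> c \<longleftrightarrow>
     (\<exists>grad::'a \<Rightarrow> 'a.
        (\<forall>x. (c has_derivative (\<lambda>h. grad x \<bullet> h)) (at x)) \<and>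
        continuous_on UNIV grad \<and>
        (\<forall>x y. norm (grad x - grad y) \<le> \<Lambda> * (norm x + norm y) powr (p - 2) * norm (x - y))) \<and>
     (\<forall>x y. \<forall>s\<in>{0..1::real}.
        (1 / \<Lambda>) * s * (1 - s) * ((norm x ^ 2 + norm y ^ 2) powr ((p - 2) / 2) * norm (x - y) ^ 2)
          + c (s *\<^sub>R x + (1 - s) *\<^sub>R y) \<le> s * c x + (1 - s) * c y) \<and>
     (\<forall>x. (1 / \<Lambda>) * norm x powr p \<le> c x \<and> c x \<le> \<Lambda> * norm x powr p) \<and>
     (\<forall>x y. \<bar>c x - c y\<bar> \<le> \<Lambda> * (norm x + norm y) powr (p - 1) * norm (x - y))"

definition c_cyclically_monotone :: "('a::real_normed_vector \<Rightarrow> real) \<Rightarrow> ('a \<times> 'a) set \<Rightarrow> bool" where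
  "c_cyclically_monotone c S \<longleftrightarrow>
     (\<forall>N::nat. \<forall>xs ys :: nat \<Rightarrow> 'a. N \<ge> 1 \<and> (\<forall>i<N. (xs i, ys i) \<in> S) \<longrightarrow>
        (\<Sum>i<N. c (xs i - ys i)) \<le> (\<Sum>i<N. c (xs i - ys ((i + 1) mod N))))"

definition msupp :: "'b::topological_space measure \<Rightarrow> 'b set" where
  "msupp M = {z. \<forall>U. open U \<and> z \<in> U \<longrightarrow> emeasure M U > 0}"

definition couplings :: "'a::euclidean_space measure \<Rightarrow> 'a measure \<Rightarrow> ('a \<times> 'a) measure set" where
  "couplings \<alpha> \<beta> = {\<gamma>. sets \<gamma> = sets (borel \<Otimes>\<^sub>M borel) \<and>
       distr \<gamma> borel fst = \<alpha> \<and> distr \<gamma> borel snd = \<beta>}"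

definition Wpp :: "real \<Rightarrow> 'a::euclidean_space measure \<Rightarrow> 'a measure \<Rightarrow> ennreal" where
  "Wpp p \<alpha> \<beta> = (INF \<gamma>\<in>couplings \<alpha> \<beta>. \<integral>\<^sup>+ z. ennreal (norm (fst z - snd z) powr p) \<partial>\<gamma>)"

definition vol_ball :: "real \<Rightarrow> 'a::euclidean_space itself \<Rightarrow> real" where
  "vol_ball R _ = measure lborel (ball (0::'a) R)"

definition kappa :: "'a::euclidean_space measure \<Rightarrow> real \<Rightarrow> real" where
  "kappa M R = measure M (ball 0 R) / vol_ball R TYPE('a)"

definition hashset :: "real \<Rightarrow> ('a::real_normed_vector \<times> 'a) set" where
  "hashset R = {z. fst z \<in> ball 0 R \<or> snd z \<in> ball 0 R}"

definition E_fun :: "('a::euclidean_space \<Rightarrow> real) \<Rightarrow> ('a \<times> 'a) measure \<Rightarrow> real \<Rightarrow> ennreal" where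
  "E_fun c \<pi> R = (\<integral>\<^sup>+ z \<in> hashset R. ennreal (c (fst z - snd z)) \<partial>\<pi>) / ennreal (vol_ball R TYPE('a))"

text \<open>One half of D(R): the contribution of a single marginal M.
  Division by kappa^(p-1) = 0 yields infinity (ennreal division).\<close>
definition D_part :: "real \<Rightarrow> 'a::euclidean_space measure \<Rightarrow> real \<Rightarrow> ennreal" where
  "D_part p M R =
     Wpp p (density M (indicator (ball 0 R)))
           (density lborel (\<lambda>x. ennreal (kappa M R) * indicator (ball 0 R) x))
       / ennreal (vol_ball R TYPE('a))
     + ennreal (R powr p * \<bar>kappa M R - 1\<bar> powr p) / ennreal (kappa M R powr (p - 1))"

definition D_fun :: "real \<Rightarrow> 'a::euclidean_space measure \<Rightarrow> 'a measure \<Rightarrow> real \<Rightarrow> ennreal" where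
  "D_fun p lam mu R = D_part p lam R + D_part p mu R"

definition Omega :: "real \<Rightarrow> ('a::real_normed_vector \<times> 'a) set" where
  "Omega R = {z \<in> hashset 3. \<exists>t\<in>{0..1::real}. t *\<^sub>R fst z + (1 - t) *\<^sub>R snd z \<in> cball 0 R}"

definition Omega_bdry :: "real \<Rightarrow> ('a::real_normed_vector \<times> 'a) set" where
  "Omega_bdry R = Omega R \<inter> {z. \<exists>t\<in>{0..1::real}. t *\<^sub>R fst z + (1 - t) *\<^sub>R snd z \<in> sphere 0 R}"

end

theory Submission
  imports Defs
begin


lemma sets_pi_borel:
  fixes \<pi> :: "('a::euclidean_space \<times> 'a) measure"
  assumes "sets \<pi> = sets (borel \<Otimes>\<^sub>M borel)"
  shows "sets \<pi> = sets borel" "space \<pi> = UNIV"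
proof -
  show "sets \<pi> = sets borel" using assms borel_prod by metis
  thus "space \<pi> = UNIV" by (metis sets_eq_imp_space_eq space_borel)
qed

lemma support_null:
  fixes \<pi> :: "('a::euclidean_space \<times> 'a) measure"
  assumes "sets \<pi> = sets (borel \<Otimes>\<^sub>M borel)"
  shows "UNIV - msupp \<pi> \<in> null_sets \<pi>"
proof -
  note S = sets_pi_borel[OF assms]
  define F where "F = {U. open U \<and> emeasure \<pi> U = 0}"
  have eq: "UNIV - msupp \<pi> = \<Union>F"
    unfolding F_def msupp_def by (auto simp: not_less)
  obtain F' where F': "F' \<subseteq> F" "countable F'" "\<Union>F' = \<Union>F"
    using Lindelof[of F] unfolding F_def by blast
  have "(\<Union>U\<in>F'. U) \<in> null_sets \<pi>"
  proof (rule null_sets_UN'[OF F'(2)])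
    fix U assume "U \<in> F'"
    hence "open U" "emeasure \<pi> U = 0" using F'(1) F_def by auto
    moreover hence "U \<in> sets \<pi>" using S(1) by simp
    ultimately show "U \<in> null_sets \<pi>" by (intro null_setsI)
  qed
  thus ?thesis using eq F'(3) by simp
qed

lemma AE_supp:
  fixes \<pi> :: "('a::euclidean_space \<times> 'a) measure"
  assumes "sets \<pi> = sets (borel \<Otimes>\<^sub>M borel)"
  shows "AE z in \<pi>. z \<in> msupp \<pi>"
  using AE_not_in[OF support_null[OF assms]] by simp



lemma ball_sets_borel[measurable]: "ball (c::'a::euclidean_space) r \<in> sets borel" by simp
lemma ball_sets_lborel[measurable]: "ball (c::'a::euclidean_space) r \<in> sets lborel" by simp
lemma ball_pred[measurable]: "Measurable.pred borel (\<lambda>x. x \<in> ball (c::'a::euclidean_space) r)"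
  using ball_sets_borel[of c r] by (simp add: pred_def)

lemma fst_meas: fixes \<gamma> :: "('a::euclidean_space \<times> 'a) measure"
  assumes "sets \<gamma> = sets (borel \<Otimes>\<^sub>M borel)" shows "fst \<in> measurable \<gamma> borel" "snd \<in> measurable \<gamma> borel"
  using measurable_cong_sets[OF assms refl] by auto

lemma marg_emeasure:
  fixes \<gamma> :: "('a::euclidean_space \<times> 'a) measure"
  assumes "sets \<gamma> = sets (borel \<Otimes>\<^sub>M borel)" "B \<in> sets borel"
  shows "emeasure \<gamma> (fst -` B) = emeasure (distr \<gamma> borel fst) B"
        "emeasure \<gamma> (snd -` B) = emeasure (distr \<gamma> borel snd) B"
  using emeasure_distr[OF fst_meas(1)[OF assms(1)] assms(2)] emeasure_distr[OF fst_meas(2)[OF assms(1)] assms(2)]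
    sets_pi_borel(2)[OF assms(1)] by auto

lemma ball_mass:
  fixes lam :: "'a::euclidean_space measure" and z :: 'a
  assumes slam: "sets lam = sets borel" and fin: "finite_measure lam"
  and sub: "ball z (\<rho>/2) \<subseteq> ball 0 R" and rho: "0 < \<rho>" and p: "0 < p"
  and W: "Wpp p (density lam (indicator (ball 0 R))) (density lborel (\<lambda>x. ennreal (kappa lam R) * indicator (ball 0 R) x)) \<le> ennreal Wr"
  and Wr: "0 \<le> Wr" and kap: "0 \<le> kappa lam R"
  shows "(\<rho>/2) powr p * (kappa lam R * (unit_ball_vol DIM('a) * (\<rho>/2)^DIM('a))) \<le> Wr + (\<rho>/2) powr p * measure lam (ball z \<rho>)"
proof -
  define M1 where "M1 = density lam (indicator (ball 0 R))"
  define M2 where "M2 = density lborel (\<lambda>x::'a. ennreal (kappa lam R) * indicator (ball 0 R) x)"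
  define X where "X = (\<rho>/2) powr p * (kappa lam R * (unit_ball_vol DIM('a) * (\<rho>/2)^DIM('a)))"
  define Y where "Y = (\<rho>/2) powr p * measure lam (ball z \<rho>)"
  define A where "A = {s::'a\<times>'a. fst s \<notin> ball z \<rho> \<and> snd s \<in> ball z (\<rho>/2)}"
  have Y0: "0 \<le> Y" unfolding Y_def by simp
  have e2: "emeasure M2 (ball z (\<rho>/2)) = ennreal (kappa lam R * (unit_ball_vol DIM('a) * (\<rho>/2)^DIM('a)))"
  proof -
    have "emeasure M2 (ball z (\<rho>/2)) = (\<integral>\<^sup>+ x. ennreal (kappa lam R) * indicator (ball 0 R) x * indicator (ball z (\<rho>/2)) x \<partial>lborel)"
      unfolding M2_def by (rule emeasure_density) measurable
    also have "\<dots> = (\<integral>\<^sup>+ x. ennreal (kappa lam R) * indicator (ball z (\<rho>/2)) x \<partial>lborel)"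
      using sub by (intro nn_integral_cong) (auto split: split_indicator)
    also have "\<dots> = ennreal (kappa lam R) * emeasure lborel (ball z (\<rho>/2))"
      by (rule nn_integral_cmult_indicator) auto
    also have "\<dots> = ennreal (kappa lam R) * ennreal (unit_ball_vol DIM('a) * (\<rho>/2)^DIM('a))"
      using rho by (simp add: emeasure_ball)
    moreover have "0 \<le> unit_ball_vol (real DIM('a)) * (\<rho>/2)^DIM('a)" using rho by simp
    ultimately show ?thesis by (simp add: ennreal_mult'')
  qed
  have e1: "emeasure M1 (ball z \<rho>) \<le> ennreal (measure lam (ball z \<rho>))"
  proof -
    have "emeasure M1 (ball z \<rho>) = (\<integral>\<^sup>+ x. indicator (ball 0 R) x * indicator (ball z \<rho>) x \<partial>lam)"
      unfolding M1_def by (rule emeasure_density) (auto simp: slam intro!: borel_measurable_indicator)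
    also have "\<dots> \<le> (\<integral>\<^sup>+ x. indicator (ball z \<rho>) x \<partial>lam)"
      by (intro nn_integral_mono) (auto split: split_indicator)
    also have "\<dots> = emeasure lam (ball z \<rho>)" by (rule nn_integral_indicator) (simp add: slam)
    also have "\<dots> = ennreal (measure lam (ball z \<rho>))" using fin by (simp add: finite_measure.emeasure_eq_measure)
    finally show ?thesis .
  qed
  have each: "ennreal (X - Y) \<le> (\<integral>\<^sup>+ s. ennreal (norm (fst s - snd s) powr p) \<partial>\<gamma>)" if g: "\<gamma> \<in> couplings M1 M2" for \<gamma>
  proof -
    have sg: "sets \<gamma> = sets (borel \<Otimes>\<^sub>M borel)" and d1: "distr \<gamma> borel fst = M1" and d2: "distr \<gamma> borel snd = M2"
      using g unfolding couplings_def by auto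
    note SS = sets_pi_borel[OF sg]
    have mBf: "fst -` ball z \<rho> \<in> sets \<gamma>" using fst_meas(1)[OF sg] SS(2) measurable_sets[of fst \<gamma> borel "ball z \<rho>"] by simp
    have mBs: "snd -` ball z (\<rho>/2) \<in> sets \<gamma>" using fst_meas(2)[OF sg] SS(2) measurable_sets[of snd \<gamma> borel "ball z (\<rho>/2)"] by simp
    have "A = (space \<gamma> - fst -` ball z \<rho>) \<inter> snd -` ball z (\<rho>/2)" unfolding A_def SS(2) by auto
    hence mA: "A \<in> sets \<gamma>" using mBf mBs by auto
    have g2: "emeasure \<gamma> (snd -` ball z (\<rho>/2)) = ennreal (kappa lam R * (unit_ball_vol DIM('a) * (\<rho>/2)^DIM('a)))"
      using marg_emeasure(2)[OF sg, of "ball z (\<rho>/2)"] d2 e2 by simp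
    have g1: "emeasure \<gamma> (fst -` ball z \<rho>) \<le> ennreal (measure lam (ball z \<rho>))"
      using marg_emeasure(1)[OF sg, of "ball z \<rho>"] d1 e1 by simp
    have "snd -` ball z (\<rho>/2) \<subseteq> A \<union> fst -` ball z \<rho>" unfolding A_def by auto
    hence "emeasure \<gamma> (snd -` ball z (\<rho>/2)) \<le> emeasure \<gamma> (A \<union> fst -` ball z \<rho>)"
      using mA mBf by (intro emeasure_mono) auto
    also have "\<dots> \<le> emeasure \<gamma> A + emeasure \<gamma> (fst -` ball z \<rho>)"
      using mA mBf by (rule emeasure_subadditive)
    finally have sub1: "ennreal (kappa lam R * (unit_ball_vol DIM('a) * (\<rho>/2)^DIM('a))) \<le> emeasure \<gamma> A + ennreal (measure lam (ball z \<rho>))"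
      using g1 g2 by (metis add_left_mono order_trans)
    have pt: "ennreal ((\<rho>/2) powr p) * indicator A s \<le> ennreal (norm (fst s - snd s) powr p)" for s
    proof (cases "s \<in> A")
      case True
      have tri: "norm (z - fst s) \<le> norm (z - snd s) + norm (fst s - snd s)"
        using norm_triangle_ineq[of "z - snd s" "snd s - fst s"] by (simp add: norm_minus_commute)
      from True have "\<rho>/2 \<le> norm (fst s - snd s)" unfolding A_def
        using tri by (auto simp: dist_norm)
      hence "(\<rho>/2) powr p \<le> norm (fst s - snd s) powr p" using rho p by (intro powr_mono2) auto
      thus ?thesis using True by simp
    qed simp
    have "ennreal ((\<rho>/2) powr p) * emeasure \<gamma> A = (\<integral>\<^sup>+ s. ennreal ((\<rho>/2) powr p) * indicator A s \<partial>\<gamma>)"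
      using mA by (rule nn_integral_cmult_indicator[symmetric])
    also have "\<dots> \<le> (\<integral>\<^sup>+ s. ennreal (norm (fst s - snd s) powr p) \<partial>\<gamma>)"
      by (intro nn_integral_mono pt)
    finally have I: "ennreal ((\<rho>/2) powr p) * emeasure \<gamma> A \<le> (\<integral>\<^sup>+ s. ennreal (norm (fst s - snd s) powr p) \<partial>\<gamma>)" .
    have "ennreal X = ennreal ((\<rho>/2) powr p) * ennreal (kappa lam R * (unit_ball_vol DIM('a) * (\<rho>/2)^DIM('a)))"
      unfolding X_def by (simp add: ennreal_mult')
    also have "\<dots> \<le> ennreal ((\<rho>/2) powr p) * (emeasure \<gamma> A + ennreal (measure lam (ball z \<rho>)))"
      using sub1 by (rule mult_left_mono) simp
    also have "\<dots> = ennreal ((\<rho>/2) powr p) * emeasure \<gamma> A + ennreal Y"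
      unfolding Y_def by (simp add: distrib_left ennreal_mult')
    also have "\<dots> \<le> (\<integral>\<^sup>+ s. ennreal (norm (fst s - snd s) powr p) \<partial>\<gamma>) + ennreal Y"
      using I by (rule add_right_mono)
    finally have "ennreal X \<le> ennreal Y + (\<integral>\<^sup>+ s. ennreal (norm (fst s - snd s) powr p) \<partial>\<gamma>)" by (simp add: add.commute)
    hence "ennreal X - ennreal Y \<le> (\<integral>\<^sup>+ s. ennreal (norm (fst s - snd s) powr p) \<partial>\<gamma>)"
      by (simp add: ennreal_minus_le_iff)
    thus ?thesis using Y0 by (simp add: ennreal_minus)
  qed
  have "ennreal (X - Y) \<le> Wpp p M1 M2" unfolding Wpp_def by (intro INF_greatest each)
  also have "\<dots> \<le> ennreal Wr" using W unfolding M1_def M2_def .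
  finally have "X - Y \<le> Wr" using Wr by simp
  thus ?thesis unfolding X_def Y_def by simp
qed



lemma vol_ball_eq: "vol_ball R TYPE('a::euclidean_space) = unit_ball_vol DIM('a) * R ^ DIM('a)" if "0 \<le> R"
  unfolding vol_ball_def using that by (simp add: measure_def emeasure_ball)

lemma vol_ball_pos: "0 < vol_ball R TYPE('a::euclidean_space)" if "0 < R"
  using that by (simp add: vol_ball_eq)

lemma kappa_nonneg: "0 \<le> kappa (M::'a::euclidean_space measure) R"
  unfolding kappa_def vol_ball_def by simp

lemma D_cons:
  fixes M :: "'a::euclidean_space measure"
  assumes D: "D_part p M 4 \<le> ennreal \<epsilon>" and e1: "\<epsilon> \<le> 1" and p: "1 < p"
  shows "Wpp p (density M (indicator (ball 0 4))) (density lborel (\<lambda>x::'a. ennreal (kappa M 4) * indicator (ball 0 4) x)) \<le> ennreal (\<epsilon> * vol_ball 4 TYPE('a))"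
    and "1/2 \<le> kappa M 4" and "kappa M 4 \<le> 2"
proof -
  define W where "W = Wpp p (density M (indicator (ball 0 4))) (density lborel (\<lambda>x::'a. ennreal (kappa M 4) * indicator (ball 0 4) x))"
  define V where "V = vol_ball 4 TYPE('a)"
  define k where "k = kappa M 4"
  define T where "T = ennreal (4 powr p * \<bar>k - 1\<bar> powr p) / ennreal (k powr (p - 1))"
  have V0: "0 < V" unfolding V_def by (rule vol_ball_pos) simp
  have k0: "0 \<le> k" unfolding k_def by (rule kappa_nonneg)
  have DD: "W / ennreal V + T \<le> ennreal \<epsilon>" using D unfolding D_part_def W_def V_def T_def k_def by simp
  have "W / ennreal V \<le> W / ennreal V + T" by (rule add_increasing2) auto
  hence WV: "W / ennreal V \<le> ennreal \<epsilon>" using DD by (rule order_trans)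
  have "W = (W / ennreal V) * ennreal V"
    using V0 by (simp add: ennreal_divide_times)
  also have "\<dots> \<le> ennreal \<epsilon> * ennreal V" using WV by (rule mult_right_mono) simp
  also have "\<dots> = ennreal (\<epsilon> * V)" using V0 by (simp add: ennreal_mult'')
  finally have "W \<le> ennreal (\<epsilon> * V)" .
  show "Wpp p (density M (indicator (ball 0 4))) (density lborel (\<lambda>x::'a. ennreal (kappa M 4) * indicator (ball 0 4) x)) \<le> ennreal (\<epsilon> * vol_ball 4 TYPE('a))"
    using \<open>W \<le> ennreal (\<epsilon> * V)\<close> unfolding W_def V_def .
  have "T \<le> W / ennreal V + T" by (rule add_increasing) auto
  also have "\<dots> \<le> ennreal \<epsilon>" by (rule DD)
  also have "\<dots> \<le> 1" using e1 by simp
  finally have T1: "T \<le> 1" .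
  have kpos: "0 < k"
  proof (rule ccontr)
    assume "\<not> 0 < k"
    hence "k = 0" using k0 by simp
    hence "T = top" unfolding T_def using p by simp
    thus False using T1 by (simp add: top_unique)
  qed
  have Teq: "T = ennreal (4 powr p * \<bar>k - 1\<bar> powr p / k powr (p - 1))"
    unfolding T_def using kpos by (simp add: divide_ennreal)
  have Tr: "4 powr p * \<bar>k - 1\<bar> powr p / k powr (p - 1) \<le> 1"
    using T1 unfolding Teq by simp
  show "1/2 \<le> kappa M 4"
  proof (rule ccontr)
    assume "\<not> 1/2 \<le> kappa M 4"
    hence kk: "k < 1/2" unfolding k_def by simp
    have "k powr (p-1) \<le> 1 powr (p-1)" using kpos kk p by (intro powr_mono2) auto
    hence "k powr (p-1) \<le> 1" by simp
    have N: "4 powr p * \<bar>k - 1\<bar> powr p = (4 * \<bar>k - 1\<bar>) powr p" by (simp add: powr_mult)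
    have "2 powr p \<le> (4 * \<bar>k - 1\<bar>) powr p" using kk p by (intro powr_mono2) auto
    hence A: "2 powr p \<le> 4 powr p * \<bar>k - 1\<bar> powr p" using N by simp
    have "2 powr p > 1" using p by simp
    have Kp: "0 < k powr (p-1)" using kpos by simp
    have "(4 powr p * \<bar>k - 1\<bar> powr p) / 1 \<le> (4 powr p * \<bar>k - 1\<bar> powr p) / k powr (p - 1)"
      using Kp \<open>k powr (p-1) \<le> 1\<close> by (intro divide_left_mono) auto
    hence "4 powr p * \<bar>k - 1\<bar> powr p / k powr (p - 1) > 1"
      using A \<open>2 powr p > 1\<close> by simp
    thus False using Tr by simp
  qed
  show "kappa M 4 \<le> 2"
  proof (rule ccontr)
    assume "\<not> kappa M 4 \<le> 2"
    hence kk: "2 < k" unfolding k_def by simp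
    have N: "4 powr p * \<bar>k - 1\<bar> powr p = (4 * \<bar>k - 1\<bar>) powr p" by (simp add: powr_mult)
    have "(2 * k) powr p \<le> (4 * \<bar>k - 1\<bar>) powr p" using kk p by (intro powr_mono2) auto
    moreover have "(2 * k) powr p = 2 powr p * k * k powr (p-1)"
    proof -
      have "k * k powr (p-1) = k powr (1 + (p-1))" using kpos by (intro powr_mult_base) simp
      hence "k * k powr (p-1) = k powr p" by simp
      thus ?thesis using kpos by (simp add: powr_mult)
    qed
    ultimately have A: "2 powr p * k * k powr (p-1) \<le> 4 powr p * \<bar>k - 1\<bar> powr p" using N by simp
    have Kp: "0 < k powr (p-1)" using kpos by simp
    have "2 powr p > 1" using p by simp
    hence gt: "2 powr p * k > 1" using kk
      by (metis less_trans mult_strict_mono one_less_numeral_iff one_le_numeral less_imp_le zero_less_one semiring_norm(76) mult.right_neutral)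
    have "(2 powr p * k * k powr (p-1)) / k powr (p-1) \<le> (4 powr p * \<bar>k - 1\<bar> powr p) / k powr (p-1)"
      using A Kp by (intro divide_right_mono) auto
    hence "2 powr p * k \<le> (4 powr p * \<bar>k - 1\<bar> powr p) / k powr (p-1)" using Kp by simp
    hence "4 powr p * \<bar>k - 1\<bar> powr p / k powr (p - 1) > 1" using gt by simp
    thus False using Tr by simp
  qed
qed



lemma mass_arg:
  fixes \<pi> :: "('a::euclidean_space \<times> 'a) measure" and Mar :: "'a measure" and P :: "'a\<times>'a \<Rightarrow> 'a"
    and c :: "'a \<Rightarrow> real" and z :: 'a
  assumes sp: "sets \<pi> = sets (borel \<Otimes>\<^sub>M borel)"
  and Pm: "P \<in> measurable \<pi> borel"
  and Pmar: "\<And>B. B \<in> sets borel \<Longrightarrow> emeasure \<pi> (P -` B) = emeasure Mar B"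
  and finM: "finite_measure Mar"
  and Ph: "\<And>s. P s \<in> ball 0 4 \<Longrightarrow> s \<in> hashset 4"
  and cl: "\<And>u. (1/\<Lambda>) * norm u powr p \<le> c u"
  and La: "1 \<le> \<Lambda>" and p: "1 < p"
  and I4: "(\<integral>\<^sup>+ s \<in> hashset 4. ennreal (c (fst s - snd s)) \<partial>\<pi>) \<le> ennreal (q * V)"
  and BM: "\<And>z \<rho>. ball z (\<rho>/2) \<subseteq> ball 0 4 \<Longrightarrow> 0 < \<rho> \<Longrightarrow>
            (\<rho>/2) powr p * (\<kappa> * (\<omega> * (\<rho>/2)^DIM('a))) \<le> q*V + (\<rho>/2) powr p * measure Mar (ball z \<rho>)"
  and kap: "1/2 \<le> \<kappa>" and q0: "0 \<le> q" and V0: "0 \<le> V" and om: "0 \<le> \<omega>"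
  and eta: "0 < \<eta>" "\<eta> \<le> 1/8"
  and m: "0 < m" "m \<le> 1" and z: "norm z \<le> 3 + m/2"
  and rep: "\<forall>s\<in>msupp \<pi>. P s \<in> ball z (\<eta>*m) \<longrightarrow> \<eta>*m < norm (fst s - snd s)"
  shows "(1/\<Lambda>) * (\<eta>*m) powr p * ((1/2) * (\<omega> * (\<eta>*m/2)^DIM('a))) \<le> (1 + 2 powr p / \<Lambda>) * (q * V)"
proof -
  define \<rho> where "\<rho> = \<eta> * m"
  have r0a: "0 < \<rho>" using eta m unfolding \<rho>_def by simp
  have "\<eta>*m \<le> (1/8)*1" by (rule mult_mono) (use eta m in auto)
  hence r0b: "\<rho> \<le> 1/8" unfolding \<rho>_def by simp
  note r0 = r0a r0b
  have bsub: "ball z \<rho> \<subseteq> ball 0 4"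
  proof
    fix u assume "u \<in> ball z \<rho>"
    hence "norm (u - z) < \<rho>" by (simp add: dist_norm norm_minus_commute)
    moreover have "norm u \<le> norm z + norm (u - z)" using norm_triangle_ineq[of z "u - z"] by simp
    ultimately show "u \<in> ball 0 4" using z m r0 by simp
  qed
  have "ball z (\<rho>/2) \<subseteq> ball z \<rho>" using r0 by (intro subset_ball) simp
  hence bsub2: "ball z (\<rho>/2) \<subseteq> ball 0 4" using bsub by (rule order.trans)
  note SS = sets_pi_borel[OF sp]
  have Bm: "P -` ball z \<rho> \<in> sets \<pi>" using measurable_sets[OF Pm, of "ball z \<rho>"] SS(2) by simp
  have eM: "emeasure \<pi> (P -` ball z \<rho>) = ennreal (measure Mar (ball z \<rho>))"
    using Pmar[of "ball z \<rho>"] finM by (simp add: finite_measure.emeasure_eq_measure)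
  have AEs: "AE s in \<pi>. s \<in> msupp \<pi>" by (rule AE_supp[OF sp])
  have "ennreal ((1/\<Lambda>) * \<rho> powr p) * ennreal (measure Mar (ball z \<rho>))
        = (\<integral>\<^sup>+ s. ennreal ((1/\<Lambda>) * \<rho> powr p) * indicator (P -` ball z \<rho>) s \<partial>\<pi>)"
    using nn_integral_cmult_indicator[OF Bm, of "ennreal ((1/\<Lambda>) * \<rho> powr p)"] eM by simp
  also have "\<dots> \<le> (\<integral>\<^sup>+ s \<in> hashset 4. ennreal (c (fst s - snd s)) \<partial>\<pi>)"
  proof (rule nn_integral_mono_AE)
    show "AE s in \<pi>. ennreal ((1/\<Lambda>) * \<rho> powr p) * indicator (P -` ball z \<rho>) s
              \<le> ennreal (c (fst s - snd s)) * indicator (hashset 4) s"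
      using AEs
    proof eventually_elim
      case (elim s)
      show ?case
      proof (cases "P s \<in> ball z \<rho>")
        case True
        have h4: "s \<in> hashset 4" using Ph True bsub by blast
        have "\<rho> < norm (fst s - snd s)" using rep elim True unfolding \<rho>_def by blast
        hence "\<rho> powr p \<le> norm (fst s - snd s) powr p" using r0 p by (intro powr_mono2) auto
        hence "(1/\<Lambda>) * \<rho> powr p \<le> (1/\<Lambda>) * norm (fst s - snd s) powr p" using La by (intro mult_left_mono) auto
        also have "\<dots> \<le> c (fst s - snd s)" by (rule cl)
        finally have "ennreal ((1/\<Lambda>) * \<rho> powr p) \<le> ennreal (c (fst s - snd s))" by (rule ennreal_leI)
        thus ?thesis using True h4 by simp
      qed simp
    qed
  qed
  also have "\<dots> \<le> ennreal (q * V)" by (rule I4)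
  finally have A: "(1/\<Lambda>) * \<rho> powr p * measure Mar (ball z \<rho>) \<le> q * V"
    using q0 V0 La by (simp add: ennreal_mult[symmetric])
  define a where "a = \<rho> powr p"
  define X where "X = \<omega> * (\<rho>/2)^DIM('a)"
  define mu where "mu = measure Mar (ball z \<rho>)"
  define t where "t = 2 powr p"
  have a0: "0 \<le> a" and X0: "0 \<le> X" and mu0: "0 \<le> mu" and t0: "0 < t"
    using r0 om unfolding a_def X_def mu_def t_def by auto
  have half: "(\<rho>/2) powr p = a / t" unfolding a_def t_def using r0 by (simp add: powr_divide)
  have B: "(a/t) * (\<kappa> * X) \<le> q*V + (a/t) * mu"
    using BM[OF bsub2 r0(1)] unfolding half X_def mu_def .
  have B2: "a * (\<kappa> * X) \<le> t * (q*V) + a * mu"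
  proof -
    have "t * ((a/t) * (\<kappa> * X)) \<le> t * (q*V + (a/t) * mu)" using B t0 by (intro mult_left_mono) auto
    moreover have "t * ((a/t) * (\<kappa> * X)) = a*(\<kappa>*X)" using t0 by simp
    moreover have "t * (q*V + (a/t)*mu) = t*(q*V) + a*mu" using t0 by (simp add: distrib_left)
    ultimately show ?thesis by linarith
  qed
  have B3: "(1/\<Lambda>) * (a * (\<kappa> * X)) \<le> (1/\<Lambda>) * (t * (q*V)) + (1/\<Lambda>) * a * mu"
  proof -
    have "(1/\<Lambda>) * (a * (\<kappa> * X)) \<le> (1/\<Lambda>) * (t * (q*V) + a * mu)" using B2 La by (intro mult_left_mono) auto
    thus ?thesis by (simp add: algebra_simps)
  qed
  have A': "(1/\<Lambda>) * a * mu \<le> q * V" using A unfolding a_def mu_def .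
  have C: "(1/\<Lambda>) * a * ((1/2) * X) \<le> (1/\<Lambda>) * (a * (\<kappa> * X))"
  proof -
    have "(1/2) * X \<le> \<kappa> * X" using kap X0 by (intro mult_right_mono) auto
    hence "a * ((1/2) * X) \<le> a * (\<kappa> * X)" using a0 by (intro mult_left_mono) auto
    moreover have "0 \<le> 1/\<Lambda>" using La by simp
    ultimately have "(1/\<Lambda>) * (a * ((1/2) * X)) \<le> (1/\<Lambda>) * (a * (\<kappa> * X))" by (rule mult_left_mono)
    thus ?thesis by (simp add: algebra_simps)
  qed
  have "(1/\<Lambda>) * a * ((1/2) * X) \<le> (1/\<Lambda>) * (t * (q*V)) + q * V" using C B3 A' by linarith
  also have "\<dots> = (1 + t / \<Lambda>) * (q * V)" by (simp add: algebra_simps)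
  finally show ?thesis unfolding a_def X_def t_def \<rho>_def by simp
qed



lemma geo:
  fixes f :: "'a::euclidean_space \<Rightarrow> real" and p \<Lambda> m \<eta> :: real and x y x' y' :: 'a
  assumes p: "1 < p" and La: "1 \<le> \<Lambda>"
  and f0: "f 0 = 0" and fnn: "\<forall>u. 0 \<le> f u"
  and conv: "\<forall>a b. \<forall>s\<in>{0..1::real}. (1 / \<Lambda>) * s * (1 - s) * ((norm a ^ 2 + norm b ^ 2) powr ((p - 2) / 2) * norm (a - b) ^ 2) + f(s *\<^sub>R a + (1-s) *\<^sub>R b) \<le> s * f a + (1-s) * f b"
  and lip: "\<forall>a b. \<bar>f a - f b\<bar> \<le> \<Lambda> * (norm a + norm b) powr (p-1) * norm (a-b)"
  and mono: "f (x-y) + f (x'-y') \<le> f (x-y') + f(x'-y)"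
  and m: "0 < m" "m \<le> norm(x-y)"
  and near: "norm (x' - (x + (m/2/norm(x-y)) *\<^sub>R (y-x))) < \<eta> * m"
  and eta: "\<eta> = 1/(\<Lambda>^2 * 2 powr (p+2))"
  shows "\<eta> * m < norm (x'-y')"
proof (rule ccontr)
  assume H: "\<not> \<eta> * m < norm (x'-y')"
  define L where "L = norm (x-y)"
  define s where "s = m/2/L"
  define a where "a = x - y"
  define v where "v = x' - (x + s *\<^sub>R (y-x))"
  define w where "w = y' - x'"
  have Lpos: "0 < L" using m L_def by linarith
  have s0: "0 < s" "s \<le> 1/2" using m Lpos L_def by (auto simp: s_def field_simps)
  have na: "norm a = L" by (simp add: a_def L_def)
  have nsa: "norm (s *\<^sub>R a) = m/2" using s0 Lpos m by (simp add: na s_def)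
  have n1sa: "norm ((1-s) *\<^sub>R a) = L - m/2"
  proof -
    have "norm ((1-s) *\<^sub>R a) = (1-s)*L" using s0 by (simp add: na)
    also have "\<dots> = L - m/2" using Lpos by (simp add: s_def field_simps)
    finally show ?thesis .
  qed
  have two: "2 powr (p+2) \<ge> 8"
  proof -
    have "2 powr (p+2) \<ge> 2 powr 3" using p by (intro powr_mono) auto
    thus ?thesis by simp
  qed
  have eta0: "0 < \<eta>" using La by (simp add: eta)
  have eta8: "\<eta> \<le> 1/8"
  proof -
    have "\<Lambda>^2 * 2 powr (p+2) \<ge> 1 * 8" using La two by (intro mult_mono) (auto simp: power_le_one_iff one_le_power)
    thus ?thesis unfolding eta by (simp add: field_simps)
  qed
  have hm8: "\<eta> * m \<le> m/8" using eta8 m(1) by (metis mult_right_mono less_imp_le mult.commute times_divide_eq_right mult.right_neutral)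
  have nv: "norm v < \<eta> * m" using near by (simp add: v_def s_def L_def)
  have nw: "norm w \<le> \<eta> * m" using H by (simp add: w_def norm_minus_commute)
  have Lp: "(norm a^2 + norm (0::'a)^2) powr ((p-2)/2) * norm (a-0)^2 = L powr p"
  proof -
    have q1: "L powr 2 = L^2" using Lpos by (intro powr_numeral) simp
    have "(L powr 2) powr ((p-2)/2) = L powr (2*((p-2)/2))" by (rule powr_powr)
    also have "2*((p-2)/2) = p-2" by simp
    finally have q2: "(L^2) powr ((p-2)/2) = L powr (p-2)" using q1 by simp
    have "L powr (p-2) * L powr 2 = L powr (p-2+2)" by (rule powr_add[symmetric])
    hence q3: "L powr (p-2) * L^2 = L powr p" using q1 by simp
    show ?thesis using q2 q3 by (simp only: na diff_zero norm_zero power_zero_numeral add_0_right)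
  qed
  have c1: "(1/\<Lambda>) * s * (1-s) * (L powr p) + f (s *\<^sub>R a) \<le> s * f a"
    using conv[rule_format, of s a 0] s0 Lp f0 by simp
  have c2: "(1/\<Lambda>) * (1-s) * (1-(1-s)) * (L powr p) + f ((1-s) *\<^sub>R a) \<le> (1-s) * f a"
    using conv[rule_format, of "1-s" a 0] s0 Lp f0 by simp
  have csum: "2*(1/\<Lambda>) * s * (1-s) * (L powr p) + f (s *\<^sub>R a) + f ((1-s) *\<^sub>R a) \<le> f a"
  proof -
    have g: "(1/\<Lambda>) * (1-s) * (1-(1-s)) * (L powr p) = (1/\<Lambda>) * s * (1-s) * (L powr p)" by (simp add: algebra_simps)
    have g2: "2*(1/\<Lambda>) * s * (1-s) * (L powr p) = 2*((1/\<Lambda>) * s * (1-s) * (L powr p))" by simp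
    have g3: "s * f a + (1-s) * f a = f a" by (simp add: algebra_simps)
    show ?thesis using c1 c2 g g2 g3 by linarith
  qed
  have e1: "x - y' = s *\<^sub>R a - v - w" by (simp add: a_def v_def w_def algebra_simps)
  have e2: "x' - y = (1-s) *\<^sub>R a + v" by (simp add: a_def v_def algebra_simps)
  have pm1: "0 < p - 1" using p by simp
  have l1: "f (s *\<^sub>R a - v - w) \<le> f (s *\<^sub>R a) + \<Lambda> * (2*L) powr (p-1) * (2*\<eta>*m)"
  proof -
    have "f (s *\<^sub>R a - v - w) - f (s *\<^sub>R a) \<le> \<Lambda> * (norm (s *\<^sub>R a - v - w) + norm (s *\<^sub>R a)) powr (p-1) * norm (s *\<^sub>R a - v - w - s *\<^sub>R a)"
      using lip[rule_format, of "s *\<^sub>R a - v - w" "s *\<^sub>R a"] by linarith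
    also have "\<dots> \<le> \<Lambda> * (2*L) powr (p-1) * (2*\<eta>*m)"
    proof -
      have A: "norm (s *\<^sub>R a - v - w) + norm (s *\<^sub>R a) \<le> 2*L"
      proof -
        have t1: "norm (s *\<^sub>R a - v - w) \<le> norm (s *\<^sub>R a - v) + norm w" by (rule norm_triangle_ineq4)
        have t2: "norm (s *\<^sub>R a - v) \<le> norm (s *\<^sub>R a) + norm v" by (rule norm_triangle_ineq4)
        have "m \<le> L" using m L_def by simp
        thus ?thesis using t1 t2 nsa nv nw hm8 m(1) by linarith
      qed
      have B: "norm (s *\<^sub>R a - v - w - s *\<^sub>R a) \<le> 2*\<eta>*m"
      proof -
        have "norm (s *\<^sub>R a - v - w - s *\<^sub>R a) = norm (v + w)" by (simp add: norm_minus_commute algebra_simps)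
        also have "\<dots> \<le> norm v + norm w" by (rule norm_triangle_ineq)
        finally show ?thesis using nv nw by simp
      qed
      have C: "(norm (s *\<^sub>R a - v - w) + norm (s *\<^sub>R a)) powr (p-1) \<le> (2*L) powr (p-1)"
        using A pm1 by (intro powr_mono2) auto
      show ?thesis using B C La by (intro mult_mono) auto
    qed
    finally show ?thesis by simp
  qed
  have l2: "f ((1-s) *\<^sub>R a + v) \<le> f ((1-s) *\<^sub>R a) + \<Lambda> * (2*L) powr (p-1) * (\<eta>*m)"
  proof -
    have "f ((1-s) *\<^sub>R a + v) - f ((1-s) *\<^sub>R a) \<le> \<Lambda> * (norm ((1-s) *\<^sub>R a + v) + norm ((1-s) *\<^sub>R a)) powr (p-1) * norm ((1-s) *\<^sub>R a + v - (1-s) *\<^sub>R a)"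
      using lip[rule_format, of "(1-s) *\<^sub>R a + v" "(1-s) *\<^sub>R a"] by linarith
    also have "\<dots> \<le> \<Lambda> * (2*L) powr (p-1) * (\<eta>*m)"
    proof -
      have A: "norm ((1-s) *\<^sub>R a + v) + norm ((1-s) *\<^sub>R a) \<le> 2*L"
      proof -
        have "norm ((1-s) *\<^sub>R a + v) \<le> norm ((1-s) *\<^sub>R a) + norm v" by (rule norm_triangle_ineq)
        thus ?thesis using n1sa nv hm8 m(1) by linarith
      qed
      have C: "(norm ((1-s) *\<^sub>R a + v) + norm ((1-s) *\<^sub>R a)) powr (p-1) \<le> (2*L) powr (p-1)"
        using A pm1 by (intro powr_mono2) auto
      show ?thesis using nv C La by (intro mult_mono) auto
    qed
    finally show ?thesis by simp
  qed
  have f_neg: "0 \<le> f (x' - y')" using fnn by simp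
  have mono': "f a + f (x'-y') \<le> f (s *\<^sub>R a - v - w) + f ((1-s) *\<^sub>R a + v)"
    using mono unfolding e1 e2 a_def .
  have eq2: "\<Lambda> * (2*L) powr (p-1) * (2*\<eta>*m) = 2 * (\<Lambda> * (2*L) powr (p-1) * (\<eta>*m))" by simp
  have eq3: "3 * \<Lambda> * (2*L) powr (p-1) * (\<eta>*m) = 3 * (\<Lambda> * (2*L) powr (p-1) * (\<eta>*m))" by simp
  have main: "2*(1/\<Lambda>) * s * (1-s) * (L powr p) \<le> 3 * \<Lambda> * (2*L) powr (p-1) * (\<eta>*m)"
    using mono' csum l1 l2 f_neg eq2 eq3 by linarith
  have lhs: "2*(1/\<Lambda>) * s * (1-s) * (L powr p) \<ge> (1/\<Lambda>) * (m/2) * L powr (p-1)"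
  proof -
    have "L powr p = L * L powr (p-1)" using Lpos by (simp add: powr_mult_base)
    hence "2*(1/\<Lambda>) * s * (1-s) * (L powr p) = (1/\<Lambda>) * (m/2) * L powr (p-1) * (2*(1-s))"
      using Lpos La by (simp add: s_def field_simps)
    moreover have "2*(1-s) \<ge> 1" using s0 by simp
    moreover have "0 \<le> (1/\<Lambda>) * (m/2) * L powr (p-1)" using La m by simp
    ultimately show ?thesis by (metis mult_left_mono mult.right_neutral)
  qed
  have rhs: "3 * \<Lambda> * (2*L) powr (p-1) * (\<eta>*m) = (3/(8*\<Lambda>)) * m * L powr (p-1)"
  proof -
    have "(2*L) powr (p-1) = 2 powr (p-1) * L powr (p-1)" using Lpos by (simp add: powr_mult)
    moreover have "2 powr (p+2) = 2 powr (p-1) * 8"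
    proof -
      have "2 powr (p+2) = 2 powr ((p-1)+3)" by (simp add: add.commute)
      also have "\<dots> = 2 powr (p-1) * 2 powr 3" by (rule powr_add)
      finally show ?thesis by simp
    qed
    ultimately show ?thesis using La by (simp add: eta field_simps power2_eq_square)
  qed
  have "(1/\<Lambda>) * (m/2) * L powr (p-1) \<le> (3/(8*\<Lambda>)) * m * L powr (p-1)"
    using main lhs rhs by linarith
  moreover have "0 < m * L powr (p-1)" using m Lpos by simp
  moreover have "(1/\<Lambda>) * (m/2) * L powr (p-1) = (1/(2*\<Lambda>)) * (m * L powr (p-1))" by simp
  moreover have "(3/(8*\<Lambda>)) * m * L powr (p-1) = (3/(8*\<Lambda>)) * (m * L powr (p-1))" by simp
  ultimately have "1/(2*\<Lambda>) \<le> 3/(8*\<Lambda>)" by (metis mult_le_cancel_right less_asym)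
  thus False using La by (simp add: field_simps)
qed



lemma cyc2:
  assumes "c_cyclically_monotone c S" "(x,y) \<in> S" "(x',y') \<in> S"
  shows "c (x-y) + c (x'-y') \<le> c (x-y') + c (x'-y)"
proof -
  define xs where "xs = (\<lambda>i::nat. if i = 0 then x else x')"
  define ys where "ys = (\<lambda>i::nat. if i = 0 then y else y')"
  have "(\<forall>i<2. (xs i, ys i) \<in> S)" using assms(2,3) unfolding xs_def ys_def by (auto simp: less_2_cases_iff)
  hence "(\<Sum>i<2. c (xs i - ys i)) \<le> (\<Sum>i<2. c (xs i - ys ((i + 1) mod 2)))"
    using assms(1) unfolding c_cyclically_monotone_def by (metis one_le_numeral)
  thus ?thesis unfolding xs_def ys_def by (simp add: numeral_2_eq_2)
qed

lemma cost_facts: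
  fixes c :: "'a::euclidean_space \<Rightarrow> real"
  assumes "cost_assms p \<Lambda> c" and p: "1 < p" and La: "1 \<le> \<Lambda>"
  shows "c 0 = 0" "\<forall>u. 0 \<le> c u" "\<And>u. (1/\<Lambda>) * norm u powr p \<le> c u" "\<And>u. c u \<le> \<Lambda> * norm u powr p"
    "\<forall>a b. \<forall>s\<in>{0..1::real}. (1 / \<Lambda>) * s * (1 - s) * ((norm a ^ 2 + norm b ^ 2) powr ((p - 2) / 2) * norm (a - b) ^ 2) + c (s *\<^sub>R a + (1-s) *\<^sub>R b) \<le> s * c a + (1-s) * c b"
    "\<forall>a b. \<bar>c a - c b\<bar> \<le> \<Lambda> * (norm a + norm b) powr (p-1) * norm (a-b)"
    "continuous_on UNIV c"
proof -
  note A = assms(1)[unfolded cost_assms_def]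
  show lo: "\<And>u. (1/\<Lambda>) * norm u powr p \<le> c u" using A by blast
  show "\<And>u. c u \<le> \<Lambda> * norm u powr p" using A by blast
  show "\<forall>a b. \<forall>s\<in>{0..1::real}. (1 / \<Lambda>) * s * (1 - s) * ((norm a ^ 2 + norm b ^ 2) powr ((p - 2) / 2) * norm (a - b) ^ 2) + c (s *\<^sub>R a + (1-s) *\<^sub>R b) \<le> s * c a + (1-s) * c b"
    using A by blast
  show "\<forall>a b. \<bar>c a - c b\<bar> \<le> \<Lambda> * (norm a + norm b) powr (p-1) * norm (a-b)" using A by blast
  have "c 0 \<le> \<Lambda> * norm (0::'a) powr p" using A by blast
  moreover have "(1/\<Lambda>) * norm (0::'a) powr p \<le> c 0" using A by blast
  ultimately show "c 0 = 0" by simp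
  show "\<forall>u. 0 \<le> c u"
  proof
    fix u
    have "(1/\<Lambda>) * norm u powr p \<le> c u" using lo .
    moreover have "0 \<le> (1/\<Lambda>) * norm u powr p" using La by simp
    ultimately show "0 \<le> c u" by linarith
  qed
  obtain grad where g: "\<forall>x. (c has_derivative (\<lambda>h. grad x \<bullet> h)) (at x)" using A by blast
  have "\<forall>x\<in>UNIV. isCont c x" using g has_derivative_continuous by blast
  thus "continuous_on UNIV c" by (rule continuous_at_imp_continuous_on)
qed



lemma eta_props:
  fixes \<Lambda> p :: real
  assumes La: "1 \<le> \<Lambda>" and p: "1 < p"
  shows "0 < 1/(\<Lambda>^2 * 2 powr (p+2))" "1/(\<Lambda>^2 * 2 powr (p+2)) \<le> 1/8"
proof -
  show "0 < 1/(\<Lambda>^2 * 2 powr (p+2))" using La by simp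
  have "2 powr (p+2) \<ge> 2 powr 3" using p by (intro powr_mono) auto
  hence two: "2 powr (p+2) \<ge> 8" by simp
  have "\<Lambda>^2 * 2 powr (p+2) \<ge> 1 * 8" using La two by (intro mult_mono) (auto simp: one_le_power)
  thus "1/(\<Lambda>^2 * 2 powr (p+2)) \<le> 1/8" by (simp add: field_simps)
qed

lemma neg_cost:
  fixes c :: "'a::euclidean_space \<Rightarrow> real"
  assumes conv: "\<forall>a b. \<forall>s\<in>{0..1::real}. (1 / \<Lambda>) * s * (1 - s) * ((norm a ^ 2 + norm b ^ 2) powr ((p - 2) / 2) * norm (a - b) ^ 2) + c (s *\<^sub>R a + (1-s) *\<^sub>R b) \<le> s * c a + (1-s) * c b"
    and lip: "\<forall>a b. \<bar>c a - c b\<bar> \<le> \<Lambda> * (norm a + norm b) powr (p-1) * norm (a-b)"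
  shows "\<forall>a b. \<forall>s\<in>{0..1::real}. (1 / \<Lambda>) * s * (1 - s) * ((norm a ^ 2 + norm b ^ 2) powr ((p - 2) / 2) * norm (a - b) ^ 2) + c (- (s *\<^sub>R a + (1-s) *\<^sub>R b)) \<le> s * c (-a) + (1-s) * c (-b)"
    and "\<forall>a b. \<bar>c (-a) - c (-b)\<bar> \<le> \<Lambda> * (norm a + norm b) powr (p-1) * norm (a-b)"
proof -
  show "\<forall>a b. \<forall>s\<in>{0..1::real}. (1 / \<Lambda>) * s * (1 - s) * ((norm a ^ 2 + norm b ^ 2) powr ((p - 2) / 2) * norm (a - b) ^ 2) + c (- (s *\<^sub>R a + (1-s) *\<^sub>R b)) \<le> s * c (-a) + (1-s) * c (-b)"
  proof (intro allI ballI)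
    fix a b :: 'a and s :: real assume "s \<in> {0..1}"
    hence "(1 / \<Lambda>) * s * (1 - s) * ((norm (-a) ^ 2 + norm (-b) ^ 2) powr ((p - 2) / 2) * norm (-a - -b) ^ 2) + c (s *\<^sub>R (-a) + (1-s) *\<^sub>R (-b)) \<le> s * c (-a) + (1-s) * c (-b)"
      using conv by blast
    moreover have "norm (-a - -b) = norm (a - b)" by (simp add: norm_minus_commute)
    moreover have "s *\<^sub>R (-a) + (1-s) *\<^sub>R (-b) = - (s *\<^sub>R a + (1-s) *\<^sub>R b)" by simp
    ultimately show "(1 / \<Lambda>) * s * (1 - s) * ((norm a ^ 2 + norm b ^ 2) powr ((p - 2) / 2) * norm (a - b) ^ 2) + c (- (s *\<^sub>R a + (1-s) *\<^sub>R b)) \<le> s * c (-a) + (1-s) * c (-b)"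
      by simp
  qed
  show "\<forall>a b. \<bar>c (-a) - c (-b)\<bar> \<le> \<Lambda> * (norm a + norm b) powr (p-1) * norm (a-b)"
  proof (intro allI)
    fix a b :: 'a
    have "\<bar>c (-a) - c (-b)\<bar> \<le> \<Lambda> * (norm (-a) + norm (-b)) powr (p-1) * norm (-a - -b)" using lip by blast
    moreover have "norm (-a - -b) = norm (a - b)" by (simp add: norm_minus_commute)
    ultimately show "\<bar>c (-a) - c (-b)\<bar> \<le> \<Lambda> * (norm a + norm b) powr (p-1) * norm (a-b)" by simp
  qed
qed

lemma Linf:
  fixes c :: "'a::euclidean_space \<Rightarrow> real" and \<pi> :: "('a \<times> 'a) measure" and lam mu :: "'a measure"
  assumes cost: "cost_assms p \<Lambda> c" and p: "1 < p" and La: "1 \<le> \<Lambda>"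
  and sp: "sets \<pi> = sets (borel \<Otimes>\<^sub>M borel)"
  and d1: "distr \<pi> borel fst = lam" and d2: "distr \<pi> borel snd = mu"
  and flam: "finite_measure lam" and fmu: "finite_measure mu"
  and cyc: "c_cyclically_monotone c (msupp \<pi>)"
  and I4: "(\<integral>\<^sup>+ s \<in> hashset 4. ennreal (c (fst s - snd s)) \<partial>\<pi>) \<le> ennreal (q * V)"
  and BMl: "\<And>z \<rho>. ball z (\<rho>/2) \<subseteq> ball 0 4 \<Longrightarrow> 0 < \<rho> \<Longrightarrow>
            (\<rho>/2) powr p * (\<kappa>l * (\<omega> * (\<rho>/2)^DIM('a))) \<le> q*V + (\<rho>/2) powr p * measure lam (ball z \<rho>)"
  and BMm: "\<And>z \<rho>. ball z (\<rho>/2) \<subseteq> ball 0 4 \<Longrightarrow> 0 < \<rho> \<Longrightarrow>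
            (\<rho>/2) powr p * (\<kappa>m * (\<omega> * (\<rho>/2)^DIM('a))) \<le> q*V + (\<rho>/2) powr p * measure mu (ball z \<rho>)"
  and kl: "1/2 \<le> \<kappa>l" and km: "1/2 \<le> \<kappa>m" and q0: "0 \<le> q" and V0: "0 \<le> V" and om: "0 \<le> \<omega>"
  and xy: "(x,y) \<in> msupp \<pi>" "(x,y) \<in> hashset 3"
  and eta: "\<eta> = 1/(\<Lambda>^2 * 2 powr (p+2))"
  and mdef: "m = min (norm (x-y)) 1"
  shows "(1/\<Lambda>) * (\<eta>*m) powr p * ((1/2) * (\<omega> * (\<eta>*m/2)^DIM('a))) \<le> (1 + 2 powr p / \<Lambda>) * (q * V)"
proof (cases "m = 0")
  case True
  thus ?thesis using q0 V0 La by simp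
next
  case False
  note CF = cost_facts[OF cost p La]
  have e0: "0 < \<eta>" "\<eta> \<le> 1/8" using eta_props[OF La p] eta by auto
  have m0: "0 < m" "m \<le> 1" "m \<le> norm (x-y)" using False mdef by auto
  define L where "L = norm (x - y)"
  have L0: "0 < L" using m0 L_def by linarith
  have RHS0: "0 \<le> (1 + 2 powr p / \<Lambda>) * (q * V)" using La q0 V0 by simp
  have "x \<in> ball 0 3 \<or> y \<in> ball 0 3" using xy(2) unfolding hashset_def by simp
  thus ?thesis
  proof
    assume xb: "x \<in> ball 0 3"
    define z where "z = x + (m/2/L) *\<^sub>R (y - x)"
    have "norm z \<le> norm x + norm ((m/2/L) *\<^sub>R (y - x))" unfolding z_def by (rule norm_triangle_ineq)
    also have "norm ((m/2/L) *\<^sub>R (y - x)) = m/2" using L0 m0 by (simp add: L_def norm_minus_commute)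
    finally have zb: "norm z \<le> 3 + m/2" using xb by simp
    have rep: "\<forall>s\<in>msupp \<pi>. fst s \<in> ball z (\<eta>*m) \<longrightarrow> \<eta>*m < norm (fst s - snd s)"
    proof (intro ballI impI)
      fix s assume sS: "s \<in> msupp \<pi>" and sb: "fst s \<in> ball z (\<eta>*m)"
      have mono: "c (x-y) + c (fst s - snd s) \<le> c (x - snd s) + c (fst s - y)"
        using cyc2[OF cyc xy(1), of "fst s" "snd s"] sS by simp
      have near: "norm (fst s - (x + (m/2/norm(x-y)) *\<^sub>R (y-x))) < \<eta> * m"
        using sb unfolding z_def L_def by (simp add: dist_norm norm_minus_commute)
      show "\<eta>*m < norm (fst s - snd s)"
        by (rule geo[OF p La CF(1) CF(2) CF(5) CF(6) mono m0(1) m0(3) near eta])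
    qed
    show ?thesis
      by (rule mass_arg[OF sp fst_meas(1)[OF sp] _ flam _ CF(3) La p I4 BMl kl q0 V0 om e0 m0(1) m0(2) zb rep])
         (auto simp: marg_emeasure(1)[OF sp] d1 hashset_def)
  next
    assume yb: "y \<in> ball 0 3"
    define f where "f = (\<lambda>u. c (- u))"
    have f0: "f 0 = 0" using CF(1) by (simp add: f_def)
    have fnn: "\<forall>u. 0 \<le> f u" using CF(2) by (simp add: f_def)
    note NC = neg_cost[OF CF(5) CF(6)]
    have fconv: "\<forall>a b. \<forall>s\<in>{0..1::real}. (1 / \<Lambda>) * s * (1 - s) * ((norm a ^ 2 + norm b ^ 2) powr ((p - 2) / 2) * norm (a - b) ^ 2) + f (s *\<^sub>R a + (1-s) *\<^sub>R b) \<le> s * f a + (1-s) * f b"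
      using NC(1) unfolding f_def .
    have flip: "\<forall>a b. \<bar>f a - f b\<bar> \<le> \<Lambda> * (norm a + norm b) powr (p-1) * norm (a-b)"
      using NC(2) unfolding f_def .
    define z where "z = y + (m/2/L) *\<^sub>R (x - y)"
    have "norm z \<le> norm y + norm ((m/2/L) *\<^sub>R (x - y))" unfolding z_def by (rule norm_triangle_ineq)
    also have "norm ((m/2/L) *\<^sub>R (x - y)) = m/2" using L0 m0 by (simp add: L_def)
    finally have zb: "norm z \<le> 3 + m/2" using yb by simp
    have m3: "m \<le> norm (y - x)" using m0 by (simp add: norm_minus_commute)
    have rep: "\<forall>s\<in>msupp \<pi>. snd s \<in> ball z (\<eta>*m) \<longrightarrow> \<eta>*m < norm (fst s - snd s)"
    proof (intro ballI impI)
      fix s assume sS: "s \<in> msupp \<pi>" and sb: "snd s \<in> ball z (\<eta>*m)"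
      have mono0: "c (x-y) + c (fst s - snd s) \<le> c (x - snd s) + c (fst s - y)"
        using cyc2[OF cyc xy(1), of "fst s" "snd s"] sS by simp
      have mono: "f (y-x) + f (snd s - fst s) \<le> f (y - fst s) + f (snd s - x)"
        using mono0 unfolding f_def by (simp add: add.commute)
      have near: "norm (snd s - (y + (m/2/norm(y-x)) *\<^sub>R (x-y))) < \<eta> * m"
        using sb unfolding z_def L_def by (simp add: dist_norm norm_minus_commute)
      have "\<eta>*m < norm (snd s - fst s)"
        by (rule geo[OF p La f0 fnn fconv flip mono m0(1) m3 near eta])
      thus "\<eta>*m < norm (fst s - snd s)" by (simp add: norm_minus_commute)
    qed
    show ?thesis
      by (rule mass_arg[OF sp fst_meas(2)[OF sp] _ fmu _ CF(3) La p I4 BMm km q0 V0 om e0 m0(1) m0(2) zb rep])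
         (auto simp: marg_emeasure(2)[OF sp] d2 hashset_def)
  qed
qed



lemma fub:
  fixes \<pi> :: "('a::euclidean_space \<times> 'a) measure" and h :: "'a\<times>'a \<Rightarrow> ennreal" and F :: "real \<Rightarrow> ennreal"
  assumes sp: "sets \<pi> = sets (borel \<Otimes>\<^sub>M borel)" and fin: "finite_measure \<pi>"
  and hm: "h \<in> borel_measurable borel"
  and del: "0 \<le> \<delta>"
  and FR: "\<And>R. R \<in> {2..3} \<Longrightarrow> F R \<le> (\<integral>\<^sup>+ s. h s * indicator {s. \<bar>norm (fst s) - R\<bar> \<le> \<delta>} s \<partial>\<pi>)"
  shows "(\<integral>\<^sup>+ R \<in> {2..3}. F R \<partial>lborel) \<le> ennreal (2*\<delta>) * (\<integral>\<^sup>+ s. h s \<partial>\<pi>)"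
proof -
  interpret pair_sigma_finite lborel \<pi>
    using fin by (simp add: pair_sigma_finite_def sigma_finite_lborel finite_measure_def)
  note SS = sets_pi_borel[OF sp]
  have hm': "h \<in> borel_measurable \<pi>" using hm by (subst measurable_cong_sets[OF SS(1) refl])
  define f where "f = (\<lambda>z::real\<times>('a\<times>'a). h (snd z) * indicator {z. \<bar>norm (fst (snd z)) - fst z\<bar> \<le> \<delta>} z)"
  have m1[measurable]: "(\<lambda>z. fst (snd z)) \<in> borel_measurable (lborel \<Otimes>\<^sub>M \<pi>)"
    using measurable_compose[OF measurable_snd[of lborel \<pi>] fst_meas(1)[OF sp]] by simp
  have m2[measurable]: "(\<lambda>z. fst z) \<in> borel_measurable (lborel \<Otimes>\<^sub>M \<pi>)"
    using measurable_fst[of lborel \<pi>] by simp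
  have m4[measurable]: "(\<lambda>z. h (snd z)) \<in> borel_measurable (lborel \<Otimes>\<^sub>M \<pi>)"
    using measurable_compose[OF measurable_snd[of lborel \<pi>] hm'] by simp
  have fm: "f \<in> borel_measurable (lborel \<Otimes>\<^sub>M \<pi>)" unfolding f_def by measurable
  have "(\<integral>\<^sup>+ R \<in> {2..3}. F R \<partial>lborel) \<le> (\<integral>\<^sup>+ R. (\<integral>\<^sup>+ s. f (R, s) \<partial>\<pi>) \<partial>lborel)"
  proof (intro nn_integral_mono)
    fix R :: real
    show "F R * indicator {2..3} R \<le> (\<integral>\<^sup>+ s. f (R, s) \<partial>\<pi>)"
    proof (cases "R \<in> {2..3}")
      case True
      have "(\<integral>\<^sup>+ s. f (R, s) \<partial>\<pi>) = (\<integral>\<^sup>+ s. h s * indicator {s. \<bar>norm (fst s) - R\<bar> \<le> \<delta>} s \<partial>\<pi>)"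
        by (intro nn_integral_cong) (simp add: f_def indicator_def)
      thus ?thesis using FR[OF True] True by simp
    qed simp
  qed
  also have "\<dots> = (\<integral>\<^sup>+ s. (\<integral>\<^sup>+ R. f (R, s) \<partial>lborel) \<partial>\<pi>)"
    by (rule Fubini[OF fm, symmetric])
  also have "\<dots> \<le> (\<integral>\<^sup>+ s. h s * ennreal (2*\<delta>) \<partial>\<pi>)"
  proof (intro nn_integral_mono)
    fix s :: "'a \<times> 'a"
    have "(\<integral>\<^sup>+ R. f (R, s) \<partial>lborel) \<le> (\<integral>\<^sup>+ R. h s * indicator {norm (fst s) - \<delta> .. norm (fst s) + \<delta>} R \<partial>lborel)"
      by (intro nn_integral_mono) (auto simp: f_def split: split_indicator)
    also have "\<dots> = h s * emeasure lborel {norm (fst s) - \<delta> .. norm (fst s) + \<delta>}"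
      by (rule nn_integral_cmult_indicator) simp
    also have "\<dots> = h s * ennreal (2*\<delta>)" using del by simp
    finally show "(\<integral>\<^sup>+ R. f (R, s) \<partial>lborel) \<le> h s * ennreal (2*\<delta>)" .
  qed
  also have "\<dots> = (\<integral>\<^sup>+ s. h s \<partial>\<pi>) * ennreal (2*\<delta>)" by (rule nn_integral_multc[OF hm'])
  finally show ?thesis by (simp add: mult.commute)
qed



lemma E_cons:
  fixes c :: "'a::euclidean_space \<Rightarrow> real"
  assumes "E_fun c \<pi> 4 \<le> ennreal q"
  shows "(\<integral>\<^sup>+ s \<in> hashset 4. ennreal (c (fst s - snd s)) \<partial>\<pi>) \<le> ennreal (q * vol_ball 4 TYPE('a))"
proof -
  define I where "I = (\<integral>\<^sup>+ s \<in> hashset 4. ennreal (c (fst s - snd s)) \<partial>\<pi>)"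
  define V where "V = vol_ball 4 TYPE('a)"
  have V0: "0 < V" unfolding V_def by (rule vol_ball_pos) simp
  have IV: "I / ennreal V \<le> ennreal q" using assms unfolding E_fun_def I_def V_def .
  have "I = (I / ennreal V) * ennreal V" using V0 by (simp add: ennreal_divide_times)
  also have "\<dots> \<le> ennreal q * ennreal V" using IV by (rule mult_right_mono) simp
  also have "\<dots> = ennreal (q * V)" using V0 by (simp add: ennreal_mult'')
  finally show ?thesis unfolding I_def V_def .
qed

lemma sphere_close:
  fixes x y :: "'a::euclidean_space"
  assumes "t \<in> {0..1::real}" "t *\<^sub>R x + (1 - t) *\<^sub>R y \<in> sphere 0 R" "norm (x - y) \<le> \<delta>"
  shows "\<bar>norm x - R\<bar> \<le> \<delta>"
proof -
  have e: "t *\<^sub>R x + (1 - t) *\<^sub>R y - x = (1-t) *\<^sub>R (y - x)" by (simp add: algebra_simps)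
  have "norm (t *\<^sub>R x + (1 - t) *\<^sub>R y) = R" using assms(2) by simp
  moreover have "\<bar>norm (t *\<^sub>R x + (1 - t) *\<^sub>R y) - norm x\<bar> \<le> norm (t *\<^sub>R x + (1 - t) *\<^sub>R y - x)"
    by (rule norm_triangle_ineq3)
  moreover have "norm (t *\<^sub>R x + (1 - t) *\<^sub>R y - x) = (1-t) * norm (x - y)" unfolding e using assms(1) by (simp add: norm_minus_commute)
  moreover have "(1-t) * norm (x - y) \<le> norm (x - y)" using assms(1) by (simp add: mult_left_le_one_le)
  ultimately show ?thesis using assms(3) by linarith
qed

theorem corollary3p3:
  fixes p \<Lambda> :: real
  assumes "1 < p" and "1 \<le> \<Lambda>"
  shows "\<exists>\<epsilon>0>0. \<exists>C>0. \<forall>(c::'a::euclidean_space \<Rightarrow> real) (lam::'a measure) (\<mu>::'a measure)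
            (\<pi>::('a \<times> 'a) measure).
     cost_assms p \<Lambda> c \<and>
     sets lam = sets borel \<and> sets \<mu> = sets borel \<and>
     finite_measure lam \<and> finite_measure \<mu> \<and>
     emeasure lam UNIV = emeasure \<mu> UNIV \<and>
     \<pi> \<in> couplings lam \<mu> \<and>
     c_cyclically_monotone c (msupp \<pi>) \<and>
     E_fun c \<pi> 4 + D_fun p lam \<mu> 4 \<le> ennreal \<epsilon>0
     \<longrightarrow>
     (\<integral>\<^sup>+ R \<in> {2..3}. (\<integral>\<^sup>+ z \<in> Omega_bdry R. ennreal (c (fst z - snd z)) \<partial>\<pi>) \<partial>lborel)
        \<le> ennreal (C * enn2real (E_fun c \<pi> 4 + D_fun p lam \<mu> 4) powr (1 + 1 / (p + real DIM('a))))
     \<and>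
     (\<integral>\<^sup>+ R \<in> {2..3}. emeasure \<pi> (Omega_bdry R) \<partial>lborel)
        \<le> ennreal (C * enn2real (E_fun c \<pi> 4 + D_fun p lam \<mu> 4) powr (1 / (p + real DIM('a))))"
proof -
  note p = assms(1) and La = assms(2)
  define \<omega> where "\<omega> = unit_ball_vol (real DIM('a))"
  define V where "V = vol_ball 4 TYPE('a)"
  define \<eta> where "\<eta> = 1/(\<Lambda>^2 * 2 powr (p+2))"
  define A0 where "A0 = (1/\<Lambda>) * \<eta> powr p * ((1/2) * (\<omega> * (\<eta>/2)^DIM('a)))"
  define K where "K = (1 + 2 powr p / \<Lambda>) * V / A0"
  define a where "a = 1 / (p + real DIM('a))"
  define \<epsilon>0 where "\<epsilon>0 = min 1 (1/(2*K))"
  define C where "C = 8 * V * K powr a"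
  have om0: "0 < \<omega>" unfolding \<omega>_def by simp
  have V0: "0 < V" unfolding V_def by (rule vol_ball_pos) simp
  have eta0: "0 < \<eta>" using eta_props[OF La p] unfolding \<eta>_def by simp
  have A00: "0 < A0" unfolding A0_def using La eta0 om0 by simp
  have K0: "0 < K" unfolding K_def using La V0 A00 by (simp add: add_pos_nonneg)
  have a0: "0 < a" unfolding a_def using p by simp
  have e0: "0 < \<epsilon>0" unfolding \<epsilon>0_def using K0 by simp
  have e1: "\<epsilon>0 \<le> 1" "K * \<epsilon>0 \<le> 1/2" unfolding \<epsilon>0_def using K0 by (auto simp: min_def field_simps)
  have C0: "0 < C" unfolding C_def using V0 K0 by simp
  have main: "\<forall>(c::'a \<Rightarrow> real) (lam::'a measure) (\<mu>::'a measure) (\<pi>::('a \<times> 'a) measure).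
     cost_assms p \<Lambda> c \<and>
     sets lam = sets borel \<and> sets \<mu> = sets borel \<and>
     finite_measure lam \<and> finite_measure \<mu> \<and>
     emeasure lam UNIV = emeasure \<mu> UNIV \<and>
     \<pi> \<in> couplings lam \<mu> \<and>
     c_cyclically_monotone c (msupp \<pi>) \<and>
     E_fun c \<pi> 4 + D_fun p lam \<mu> 4 \<le> ennreal \<epsilon>0
     \<longrightarrow>
     (\<integral>\<^sup>+ R \<in> {2..3}. (\<integral>\<^sup>+ z \<in> Omega_bdry R. ennreal (c (fst z - snd z)) \<partial>\<pi>) \<partial>lborel)
        \<le> ennreal (C * enn2real (E_fun c \<pi> 4 + D_fun p lam \<mu> 4) powr (1 + 1 / (p + real DIM('a))))
     \<and>
     (\<integral>\<^sup>+ R \<in> {2..3}. emeasure \<pi> (Omega_bdry R) \<partial>lborel)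
        \<le> ennreal (C * enn2real (E_fun c \<pi> 4 + D_fun p lam \<mu> 4) powr (1 / (p + real DIM('a))))"
  proof (intro allI impI)
    fix c :: "'a \<Rightarrow> real" and lam \<mu> :: "'a measure" and \<pi> :: "('a \<times> 'a) measure"
    assume H: "cost_assms p \<Lambda> c \<and>
     sets lam = sets borel \<and> sets \<mu> = sets borel \<and>
     finite_measure lam \<and> finite_measure \<mu> \<and>
     emeasure lam UNIV = emeasure \<mu> UNIV \<and>
     \<pi> \<in> couplings lam \<mu> \<and>
     c_cyclically_monotone c (msupp \<pi>) \<and>
     E_fun c \<pi> 4 + D_fun p lam \<mu> 4 \<le> ennreal \<epsilon>0"
    hence cost: "cost_assms p \<Lambda> c" and slam: "sets lam = sets borel" and smu: "sets \<mu> = sets borel"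
      and flam: "finite_measure lam" and fmu: "finite_measure \<mu>" and cpl: "\<pi> \<in> couplings lam \<mu>"
      and cyc: "c_cyclically_monotone c (msupp \<pi>)" and QE: "E_fun c \<pi> 4 + D_fun p lam \<mu> 4 \<le> ennreal \<epsilon>0"
      by auto
    have sp: "sets \<pi> = sets (borel \<Otimes>\<^sub>M borel)" and d1: "distr \<pi> borel fst = lam" and d2: "distr \<pi> borel snd = \<mu>"
      using cpl unfolding couplings_def by auto
    note SS = sets_pi_borel[OF sp]
    note CF = cost_facts[OF cost p La]
    define Q where "Q = E_fun c \<pi> 4 + D_fun p lam \<mu> 4"
    define q where "q = enn2real Q"
    have Qfin: "Q \<noteq> top" using QE unfolding Q_def by (metis ennreal_neq_top neq_top_trans)
    have Qq: "Q = ennreal q" unfolding q_def using Qfin by (simp add: ennreal_enn2real_if)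
    have q0: "0 \<le> q" unfolding q_def by simp
    have qe: "q \<le> \<epsilon>0" using QE e0 unfolding Q_def[symmetric] Qq by simp
    have q1: "q \<le> 1" using qe e1 by simp
    have EQ: "E_fun c \<pi> 4 \<le> ennreal q" unfolding Qq[symmetric] Q_def by (rule add_increasing2) auto
    have DQ: "D_fun p lam \<mu> 4 \<le> ennreal q" unfolding Qq[symmetric] Q_def by (rule add_increasing) auto
    have Dl: "D_part p lam 4 \<le> ennreal q" using DQ unfolding D_fun_def by (metis add_increasing2 zero_le order_trans order_refl)
    have Dm: "D_part p \<mu> 4 \<le> ennreal q" using DQ unfolding D_fun_def by (metis add_increasing zero_le order_trans order_refl)
    have I4: "(\<integral>\<^sup>+ s \<in> hashset 4. ennreal (c (fst s - snd s)) \<partial>\<pi>) \<le> ennreal (q * V)"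
      using E_cons[OF EQ] unfolding V_def .
    note DCl = D_cons[OF Dl q1 p] and DCm = D_cons[OF Dm q1 p]
    have qV0: "0 \<le> q * V" using q0 V0 by simp
    have BMl: "\<And>z \<rho>. ball z (\<rho>/2) \<subseteq> ball 0 4 \<Longrightarrow> 0 < \<rho> \<Longrightarrow>
            (\<rho>/2) powr p * (kappa lam 4 * (\<omega> * (\<rho>/2)^DIM('a))) \<le> q*V + (\<rho>/2) powr p * measure lam (ball z \<rho>)"
      unfolding \<omega>_def using ball_mass[OF slam flam _ _ _ DCl(1)[unfolded V_def[symmetric]] qV0 kappa_nonneg] p by simp
    have BMm: "\<And>z \<rho>. ball z (\<rho>/2) \<subseteq> ball 0 4 \<Longrightarrow> 0 < \<rho> \<Longrightarrow>
            (\<rho>/2) powr p * (kappa \<mu> 4 * (\<omega> * (\<rho>/2)^DIM('a))) \<le> q*V + (\<rho>/2) powr p * measure \<mu> (ball z \<rho>)"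
      unfolding \<omega>_def using ball_mass[OF smu fmu _ _ _ DCm(1)[unfolded V_def[symmetric]] qV0 kappa_nonneg] p by simp
    define \<delta> where "\<delta> = (K * q) powr a"
    have del0: "0 \<le> \<delta>" unfolding \<delta>_def by simp
    have key: "norm (fst s - snd s) \<le> \<delta>" if sS: "s \<in> msupp \<pi>" and s3: "s \<in> hashset 3" for s
    proof -
      define L where "L = norm (fst s - snd s)"
      define m where "m = min L 1"
      have m0: "0 \<le> m" "m \<le> 1" unfolding m_def L_def by auto
      have mdef: "m = min (norm (fst s - snd s)) 1" unfolding m_def L_def by (rule refl)
      have sS': "(fst s, snd s) \<in> msupp \<pi>" "(fst s, snd s) \<in> hashset 3" using sS s3 by auto
      have LI: "(1/\<Lambda>) * (\<eta>*m) powr p * ((1/2) * (\<omega> * (\<eta>*m/2)^DIM('a))) \<le> (1 + 2 powr p / \<Lambda>) * (q * V)"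
        by (rule Linf[OF cost p La sp d1 d2 flam fmu cyc I4 BMl BMm DCl(2) DCm(2) q0 less_imp_le[OF V0] less_imp_le[OF om0] sS' \<eta>_def mdef])
      have "(1/\<Lambda>) * (\<eta>*m) powr p * ((1/2) * (\<omega> * (\<eta>*m/2)^DIM('a))) = A0 * (m powr p * m ^ DIM('a))"
      proof -
        have "\<eta>*m/2 = (\<eta>/2)*m" by simp
        hence pw: "(\<eta>*m/2)^DIM('a) = (\<eta>/2)^DIM('a) * m^DIM('a)" by (simp only: power_mult_distrib)
        have pp: "(\<eta>*m) powr p = \<eta> powr p * m powr p" using eta0 m0 by (simp add: powr_mult)
        show ?thesis unfolding A0_def pw pp by (simp add: algebra_simps)
      qed
      moreover have "A0 * (K * q) = (1 + 2 powr p / \<Lambda>) * (q * V)" unfolding K_def using A00 by simp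
      ultimately have "A0 * (m powr p * m ^ DIM('a)) \<le> A0 * (K * q)"
        using LI by linarith
      hence mk: "m powr p * m ^ DIM('a) \<le> K * q" using A00 by simp
      have mpow: "m powr p * m ^ DIM('a) = m powr (p + real DIM('a))"
      proof (cases "m = 0")
        case False
        hence "0 < m" using m0 by simp
        thus ?thesis by (simp add: powr_add powr_realpow)
      qed simp
      have Kq: "K * q \<le> 1/2"
      proof -
        have "K * q \<le> K * \<epsilon>0" using qe K0 by simp
        thus ?thesis using e1 by simp
      qed
      have L1: "L < 1"
      proof (rule ccontr)
        assume "\<not> L < 1"
        hence "m = 1" unfolding m_def by simp
        thus False using mk Kq by simp
      qed
      hence mL: "m = L" unfolding m_def by simp
      have "L powr (p + real DIM('a)) \<le> K * q" using mk mpow mL by simp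
      hence "(L powr (p + real DIM('a))) powr a \<le> (K * q) powr a"
        using a0 by (intro powr_mono2) (auto simp: L_def)
      moreover have "(L powr (p + real DIM('a))) powr a = L"
        unfolding a_def using p by (simp add: powr_powr L_def)
      ultimately show ?thesis unfolding \<delta>_def L_def by simp
    qed
    have AEs: "AE s in \<pi>. s \<in> msupp \<pi>" by (rule AE_supp[OF sp])
    have ind: "(indicator (Omega_bdry R) s :: ennreal) \<le> indicator (hashset 3) s * indicator {s. \<bar>norm (fst s) - R\<bar> \<le> \<delta>} s"
      if "s \<in> msupp \<pi>" for s R
    proof (cases "s \<in> Omega_bdry R")
      case True
      hence s3: "s \<in> hashset 3" and "\<exists>t\<in>{0..1::real}. t *\<^sub>R fst s + (1 - t) *\<^sub>R snd s \<in> sphere 0 R"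
        unfolding Omega_bdry_def Omega_def by auto
      then obtain t where t: "t \<in> {0..1::real}" "t *\<^sub>R fst s + (1 - t) *\<^sub>R snd s \<in> sphere 0 R" by blast
      have "\<bar>norm (fst s) - R\<bar> \<le> \<delta>" by (rule sphere_close[OF t key[OF that s3]])
      thus ?thesis using True s3 by simp
    qed simp
    have finpi: "finite_measure \<pi>"
    proof
      have "emeasure \<pi> (space \<pi>) = emeasure \<pi> (fst -` UNIV)" using SS by simp
      also have "\<dots> = emeasure lam UNIV" using marg_emeasure(1)[OF sp, of UNIV] d1 by simp
      finally show "emeasure \<pi> (space \<pi>) \<noteq> \<infinity>" using flam by (simp add: finite_measure.emeasure_finite)
    qed
    have cm: "c \<in> borel_measurable borel" by (rule borel_measurable_continuous_onI[OF CF(7)])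
    have h3m[measurable]: "hashset 3 \<in> sets (borel :: ('a\<times>'a) measure)"
    proof -
      have "hashset 3 = fst -` ball 0 3 \<union> snd -` ball (0::'a) 3" unfolding hashset_def by auto
      moreover have "open (fst -` ball 0 3 \<union> snd -` ball (0::'a) 3)"
        by (intro open_Un open_vimage_fst open_vimage open_ball continuous_on_snd continuous_on_id)
      ultimately show ?thesis by (metis borel_open)
    qed
    have g1[measurable]: "(\<lambda>s. c (fst s - snd s)) \<in> borel_measurable (borel :: ('a\<times>'a) measure)"
      by (rule borel_measurable_continuous_onI, rule continuous_on_compose2[OF CF(7)]) (auto intro!: continuous_intros)
    have i1[measurable]: "(indicator (hashset 3) :: 'a\<times>'a \<Rightarrow> ennreal) \<in> borel_measurable borel"
      by (rule borel_measurable_indicator[OF h3m])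
    have hm1: "(\<lambda>s. ennreal (c (fst s - snd s)) * indicator (hashset 3) s) \<in> borel_measurable (borel :: ('a\<times>'a) measure)"
      by measurable
    have hm2: "(\<lambda>s. indicator (hashset 3) s :: ennreal) \<in> borel_measurable (borel :: ('a\<times>'a) measure)"
      using i1 by simp
    have RHS_a: "2 * \<delta> * (q * V) \<le> C * q powr (1 + a)"
    proof -
      have "\<delta> = K powr a * q powr a" unfolding \<delta>_def using K0 q0 by (simp add: powr_mult)
      moreover have "q powr (1 + a) = q * q powr a"
      proof (cases "q = 0")
        case False thus ?thesis using q0 by (simp add: powr_add)
      qed simp
      ultimately have "C * q powr (1 + a) = 4 * (2 * \<delta> * (q * V))" unfolding C_def by (simp add: algebra_simps)
      moreover have "0 \<le> 2 * \<delta> * (q * V)" using del0 qV0 by simp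
      ultimately show ?thesis by linarith
    qed
    have RHS_b: "2 * \<delta> * (4 * V) \<le> C * q powr a"
    proof -
      have "\<delta> = K powr a * q powr a" unfolding \<delta>_def using K0 q0 by (simp add: powr_mult)
      thus ?thesis unfolding C_def by (simp add: algebra_simps)
    qed
    show "(\<integral>\<^sup>+ R \<in> {2..3}. (\<integral>\<^sup>+ z \<in> Omega_bdry R. ennreal (c (fst z - snd z)) \<partial>\<pi>) \<partial>lborel)
        \<le> ennreal (C * enn2real (E_fun c \<pi> 4 + D_fun p lam \<mu> 4) powr (1 + 1 / (p + real DIM('a))))
     \<and>
     (\<integral>\<^sup>+ R \<in> {2..3}. emeasure \<pi> (Omega_bdry R) \<partial>lborel)
        \<le> ennreal (C * enn2real (E_fun c \<pi> 4 + D_fun p lam \<mu> 4) powr (1 / (p + real DIM('a))))"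
    proof
      have "(\<integral>\<^sup>+ R \<in> {2..3}. (\<integral>\<^sup>+ z \<in> Omega_bdry R. ennreal (c (fst z - snd z)) \<partial>\<pi>) \<partial>lborel)
            \<le> ennreal (2*\<delta>) * (\<integral>\<^sup>+ s. ennreal (c (fst s - snd s)) * indicator (hashset 3) s \<partial>\<pi>)"
      proof (rule fub[OF sp finpi hm1 del0])
        fix R :: real
        show "(\<integral>\<^sup>+ z \<in> Omega_bdry R. ennreal (c (fst z - snd z)) \<partial>\<pi>)
              \<le> (\<integral>\<^sup>+ s. ennreal (c (fst s - snd s)) * indicator (hashset 3) s * indicator {s. \<bar>norm (fst s) - R\<bar> \<le> \<delta>} s \<partial>\<pi>)"
        proof (rule nn_integral_mono_AE)
          show "AE s in \<pi>. ennreal (c (fst s - snd s)) * indicator (Omega_bdry R) s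
                \<le> ennreal (c (fst s - snd s)) * indicator (hashset 3) s * indicator {s. \<bar>norm (fst s) - R\<bar> \<le> \<delta>} s"
            using AEs
          proof eventually_elim
            case (elim s)
            have "ennreal (c (fst s - snd s)) * indicator (Omega_bdry R) s
                  \<le> ennreal (c (fst s - snd s)) * (indicator (hashset 3) s * indicator {s. \<bar>norm (fst s) - R\<bar> \<le> \<delta>} s)"
              using ind[OF elim, of R] by (intro mult_left_mono) auto
            thus ?case by (simp add: mult.assoc)
          qed
        qed
      qed
      also have "\<dots> \<le> ennreal (2*\<delta>) * ennreal (q * V)"
      proof (rule mult_left_mono)
        have "(\<integral>\<^sup>+ s. ennreal (c (fst s - snd s)) * indicator (hashset 3) s \<partial>\<pi>)
              \<le> (\<integral>\<^sup>+ s \<in> hashset 4. ennreal (c (fst s - snd s)) \<partial>\<pi>)"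
          by (intro nn_integral_mono) (auto simp: hashset_def split: split_indicator)
        thus "(\<integral>\<^sup>+ s. ennreal (c (fst s - snd s)) * indicator (hashset 3) s \<partial>\<pi>) \<le> ennreal (q * V)"
          using I4 by (rule order_trans)
      qed simp
      also have "\<dots> = ennreal (2 * \<delta> * (q * V))" by (rule ennreal_mult[symmetric]) (use del0 qV0 in auto)
      also have "\<dots> \<le> ennreal (C * q powr (1 + a))" using RHS_a by (rule ennreal_leI)
      finally show "(\<integral>\<^sup>+ R \<in> {2..3}. (\<integral>\<^sup>+ z \<in> Omega_bdry R. ennreal (c (fst z - snd z)) \<partial>\<pi>) \<partial>lborel)
        \<le> ennreal (C * enn2real (E_fun c \<pi> 4 + D_fun p lam \<mu> 4) powr (1 + 1 / (p + real DIM('a))))"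
        unfolding Q_def[symmetric] q_def[symmetric] a_def .
    next
      have "(\<integral>\<^sup>+ R \<in> {2..3}. emeasure \<pi> (Omega_bdry R) \<partial>lborel)
            \<le> ennreal (2*\<delta>) * (\<integral>\<^sup>+ s. indicator (hashset 3) s \<partial>\<pi>)"
      proof (rule fub[OF sp finpi hm2 del0])
        fix R :: real
        show "emeasure \<pi> (Omega_bdry R)
              \<le> (\<integral>\<^sup>+ s. indicator (hashset 3) s * indicator {s. \<bar>norm (fst s) - R\<bar> \<le> \<delta>} s \<partial>\<pi>)"
        proof (cases "Omega_bdry R \<in> sets \<pi>")
          case True
          have "emeasure \<pi> (Omega_bdry R) = (\<integral>\<^sup>+ s. indicator (Omega_bdry R) s \<partial>\<pi>)"
            using True by simp
          also have "\<dots> \<le> (\<integral>\<^sup>+ s. indicator (hashset 3) s * indicator {s. \<bar>norm (fst s) - R\<bar> \<le> \<delta>} s \<partial>\<pi>)"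
            using AEs
            by (intro nn_integral_mono_AE) (auto elim!: eventually_mono intro: ind)
          finally show ?thesis .
        next
          case False
          thus ?thesis by (simp add: emeasure_notin_sets)
        qed
      qed
      also have "\<dots> \<le> ennreal (2*\<delta>) * ennreal (4 * V)"
      proof (rule mult_left_mono)
        have h3: "hashset 3 \<in> sets \<pi>" using SS by simp
        have eqh: "hashset 3 = fst -` ball 0 3 \<union> snd -` ball (0::'a) 3" unfolding hashset_def by auto
        have f3: "fst -` ball 0 3 \<in> sets \<pi>" using measurable_sets[OF fst_meas(1)[OF sp], of "ball (0::'a) 3"] SS by simp
        have s3: "snd -` ball 0 3 \<in> sets \<pi>" using measurable_sets[OF fst_meas(2)[OF sp], of "ball (0::'a) 3"] SS by simp
        have "(\<integral>\<^sup>+ s. indicator (hashset 3) s \<partial>\<pi>) = emeasure \<pi> (hashset 3)" using h3 by simp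
        also have "\<dots> = emeasure \<pi> (fst -` ball 0 3 \<union> snd -` ball (0::'a) 3)" using eqh by simp
        also have "\<dots> \<le> emeasure \<pi> (fst -` ball 0 3) + emeasure \<pi> (snd -` ball 0 3)"
          using f3 s3 by (rule emeasure_subadditive)
        also have "\<dots> = emeasure lam (ball 0 3) + emeasure \<mu> (ball 0 3)"
          using marg_emeasure[OF sp, of "ball 0 3"] d1 d2 by simp
        also have "\<dots> \<le> emeasure lam (ball 0 4) + emeasure \<mu> (ball 0 4)"
          by (intro add_mono emeasure_mono) (auto simp: slam smu)
        also have "\<dots> = ennreal (kappa lam 4 * V) + ennreal (kappa \<mu> 4 * V)"
        proof -
          have "measure lam (ball 0 4) = kappa lam 4 * V" "measure \<mu> (ball 0 4) = kappa \<mu> 4 * V"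
            unfolding kappa_def V_def using V0[unfolded V_def] by auto
          thus ?thesis using flam fmu by (simp add: finite_measure.emeasure_eq_measure)
        qed
        also have "\<dots> \<le> ennreal (2 * V) + ennreal (2 * V)"
          using DCl(3) DCm(3) V0 by (intro add_mono ennreal_leI mult_right_mono) auto
        also have "\<dots> = ennreal (4 * V)" using V0 by (simp flip: ennreal_plus)
        finally show "(\<integral>\<^sup>+ s. indicator (hashset 3) s \<partial>\<pi>) \<le> ennreal (4 * V)" .
      qed simp
      also have "\<dots> = ennreal (2 * \<delta> * (4 * V))" by (rule ennreal_mult[symmetric]) (use del0 V0 in auto)
      also have "\<dots> \<le> ennreal (C * q powr a)" using RHS_b by (rule ennreal_leI)
      finally show "(\<integral>\<^sup>+ R \<in> {2..3}. emeasure \<pi> (Omega_bdry R) \<partial>lborel)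
        \<le> ennreal (C * enn2real (E_fun c \<pi> 4 + D_fun p lam \<mu> 4) powr (1 / (p + real DIM('a))))"
        unfolding Q_def[symmetric] q_def[symmetric] a_def .
    qed
  qed
  show ?thesis using main e0 C0 by blast
qed


end
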